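(* Fix $d\ge1$, the feasible set $\mathcal{X}=\mathbb{R}^d$, starting point $x_0=\mathbf{0}$, and $0<\mu\le L$, with quadratic switching cost. For every online algorithm $\mathcal{A}$ operating in the limited information setting, the competitive ratio satisfies $\mathrm{cr}_{\mathcal{A}}\ge L$.
   Context: A problem instance consists of a horizon $T\ge1$ and differentiable functions $f_1,\dots,f_T:\mathbb{R}^d\to[0,\infty)$ with $\frac{\mu}{2}\|y-x\|^2\le f_t(y)-f_t(x)-\langle\nabla f_t(x),y-x\rangle\le\frac{L}{2}\|y-x\|^2$ for all $x,y$. An online algorithm in the limited information setting chooses, at each time $t$, an action $x_t$ using only $x_0$, the known parameters, and gradients of $f_{t-1}$ (and of earlier functions) evaluated at finitely many (adaptively chosen) points; in particular $x_t$ is chosen without any information about $f_t,\dots,f_T$. The algorithm's cost is $C_{\mathcal{A}}=\sum_{t=1}^T\big(f_t(x_t)+\frac12\|x_t-x_{t-1}\|^2\big)$, $C_{\mathsf{OPT}}$ is the minimum of the same expression over all $(x_1,\dots,x_T)$ with the same $x_0$, and $\mathrm{cr}_{\mathcal{A}}=\sup C_{\mathcal{A}}/C_{\mathsf{OPT}}$ over all problem instances. *)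

theory Defs
  imports "HOL-Analysis.Analysis"
begin

definition valid_instance ::
  "real \<Rightarrow> real \<Rightarrow> nat \<Rightarrow> (nat \<Rightarrow> real^'d \<Rightarrow> real) \<Rightarrow> (nat \<Rightarrow> real^'d \<Rightarrow> real^'d) \<Rightarrow> bool"
where
  "valid_instance \<mu> L T f gf \<longleftrightarrow> T \<ge> 1 \<and>
     (\<forall>t\<in>{1..T}. \<forall>x. (f t has_derivative (\<lambda>h. gf t x \<bullet> h)) (at x)) \<and>
     (\<forall>t\<in>{1..T}. \<forall>x. f t x \<ge> 0) \<and>
     (\<forall>t\<in>{1..T}. \<forall>x y.
        \<mu> / 2 * (norm (y - x))\<^sup>2 \<le> f t y - f t x - gf t x \<bullet> (y - x) \<and>
        f t y - f t x - gf t x \<bullet> (y - x) \<le> L / 2 * (norm (y - x))\<^sup>2)"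

definition total_cost :: "nat \<Rightarrow> (nat \<Rightarrow> real^'d \<Rightarrow> real) \<Rightarrow> (nat \<Rightarrow> real^'d) \<Rightarrow> real" where
  "total_cost T f xs = (\<Sum>t=1..T. f t (xs t) + 1/2 * (norm (xs t - xs (t - 1)))\<^sup>2)"

definition opt_cost :: "nat \<Rightarrow> (nat \<Rightarrow> real^'d \<Rightarrow> real) \<Rightarrow> real" where
  "opt_cost T f = Inf {total_cost T f xs | xs. xs 0 = 0}"

text \<open>An algorithm is a pair (Q, X).
  At time t, given its history h (all queries made so far with their answers), it either asks
  for the gradient of f s at a point y (Q t h = Some (s, y)), or stops querying (Q t h = None)
  and plays X t h.  Only gradients of earlier functions f s, 1 \<le> s < t, are revealed; other
  queries are answered by 0 (no information).\<close>

type_synonym 'd hist = "(nat \<times> (real^'d) \<times> (real^'d)) list"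

definition oracle_ans :: "(nat \<Rightarrow> real^'d \<Rightarrow> real^'d) \<Rightarrow> nat \<Rightarrow> nat \<Rightarrow> real^'d \<Rightarrow> real^'d" where
  "oracle_ans gf t s y = (if 1 \<le> s \<and> s < t then gf s y else 0)"

definition qstep ::
  "(nat \<Rightarrow> 'd hist \<Rightarrow> (nat \<times> (real^'d)) option) \<Rightarrow> (nat \<Rightarrow> real^'d \<Rightarrow> real^'d) \<Rightarrow> nat \<Rightarrow> 'd hist \<Rightarrow> 'd hist"
where
  "qstep Q gf t h = (case Q t h of None \<Rightarrow> h | Some (s, y) \<Rightarrow> h @ [(s, y, oracle_ans gf t s y)])"

definition finite_queries :: "(nat \<Rightarrow> 'd hist \<Rightarrow> (nat \<times> (real^'d)) option) \<Rightarrow> bool" where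
  "finite_queries Q \<longleftrightarrow> (\<forall>gf t h. \<exists>n. Q t ((qstep Q gf t ^^ n) h) = None)"

definition phase ::
  "(nat \<Rightarrow> 'd hist \<Rightarrow> (nat \<times> (real^'d)) option) \<Rightarrow> (nat \<Rightarrow> real^'d \<Rightarrow> real^'d) \<Rightarrow> nat \<Rightarrow> 'd hist \<Rightarrow> 'd hist"
where
  "phase Q gf t h = (qstep Q gf t ^^ (LEAST n. Q t ((qstep Q gf t ^^ n) h) = None)) h"

fun history ::
  "(nat \<Rightarrow> 'd hist \<Rightarrow> (nat \<times> (real^'d)) option) \<Rightarrow> (nat \<Rightarrow> real^'d \<Rightarrow> real^'d) \<Rightarrow> nat \<Rightarrow> 'd hist"
where
  "history Q gf 0 = []"
| "history Q gf (Suc t) = phase Q gf (Suc t) (history Q gf t)"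

definition alg_action ::
  "(nat \<Rightarrow> 'd hist \<Rightarrow> (nat \<times> (real^'d)) option) \<Rightarrow> (nat \<Rightarrow> 'd hist \<Rightarrow> real^'d)
     \<Rightarrow> (nat \<Rightarrow> real^'d \<Rightarrow> real^'d) \<Rightarrow> nat \<Rightarrow> real^'d"
where
  "alg_action Q X gf t = (if t = 0 then 0 else X t (history Q gf t))"

end

theory Submission
  imports Defs
begin

lemma sq_id:
  fixes a x y :: "real^'d"
  shows "(norm (y - a))\<^sup>2 - (norm (x - a))\<^sup>2 - 2 * ((x - a) \<bullet> (y - x)) = (norm (y - x))\<^sup>2"
  unfolding power2_norm_eq_inner
  by (simp add: inner_diff_left inner_diff_right inner_commute algebra_simps)

lemma phase1_indep:
  "phase Q gf (Suc 0) [] = phase Q (\<lambda>_ _. 0) (Suc 0) []"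
proof -
  have "qstep Q gf (Suc 0) = qstep Q (\<lambda>_ _. 0) (Suc 0)"
    by (intro ext) (simp add: qstep_def oracle_ans_def split: option.split)
  then show ?thesis unfolding phase_def by simp
qed

theorem lemma9:
  fixes \<mu> L :: real
    and Q :: "nat \<Rightarrow> 'd hist \<Rightarrow> (nat \<times> (real^'d)) option"
    and X :: "nat \<Rightarrow> 'd hist \<Rightarrow> real^'d"
  assumes "0 < \<mu>" and "\<mu> \<le> L"
    and "finite_queries Q"
  shows "\<forall>c < L. \<exists>T f gf. valid_instance \<mu> L T f gf \<and>
           total_cost T f (alg_action Q X gf) > c * opt_cost T f"
proof (intro allI impI)
  fix c assume cL: "c < L"
  have L0: "L > 0" using assms by linarith
  define p where "p = X 1 (phase Q (\<lambda>_ _. 0) (Suc 0) [])"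
  define a :: "real^'d" where "a = (if p = 0 then (\<chi> i. (1::real)) else - p)"
  have a0: "a \<noteq> 0"
  proof
    assume "a = 0"
    then show False
    proof (cases "p = 0")
      case True
      with \<open>a = 0\<close> have "(\<chi> i. (1::real)) = (0::real^'d)"
        unfolding a_def by simp
      then show False by (metis vec_lambda_beta zero_index zero_neq_one)
    next
      case False
      with \<open>a = 0\<close> show False unfolding a_def by simp
    qed
  qed
  define f :: "nat \<Rightarrow> real^'d \<Rightarrow> real" where "f = (\<lambda>t x. L / 2 * (norm (x - a))\<^sup>2)"
  define gf :: "nat \<Rightarrow> real^'d \<Rightarrow> real^'d" where "gf = (\<lambda>t x. L *\<^sub>R (x - a))"
  have valid: "valid_instance \<mu> L 1 f gf"
    unfolding valid_instance_def
  proof (intro conjI ballI allI)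
    fix t x
    have "((\<lambda>x. L / 2 * ((x - a) \<bullet> (x - a))) has_derivative
           (\<lambda>h. L / 2 * (h \<bullet> (x - a) + (x - a) \<bullet> h))) (at x)"
      by (intro derivative_eq_intros) auto
    moreover have "(\<lambda>h. L / 2 * (h \<bullet> (x - a) + (x - a) \<bullet> h)) = (\<lambda>h. gf t x \<bullet> h)"
      by (auto simp: gf_def inner_commute algebra_simps)
    moreover have "(\<lambda>x. L / 2 * ((x - a) \<bullet> (x - a))) = f t"
      by (auto simp: f_def power2_norm_eq_inner)
    ultimately show "(f t has_derivative (\<lambda>h. gf t x \<bullet> h)) (at x)" by simp
  next
    fix t x show "f t x \<ge> 0" using L0 by (simp add: f_def)
  next
    fix t x y
    have e: "f t y - f t x - gf t x \<bullet> (y - x) = L / 2 * (norm (y - x))\<^sup>2"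
    proof -
      have "f t y - f t x - gf t x \<bullet> (y - x) =
        L / 2 * ((norm (y - a))\<^sup>2 - (norm (x - a))\<^sup>2 - 2 * ((x - a) \<bullet> (y - x)))"
        unfolding f_def gf_def inner_scaleR_left by (simp add: right_diff_distrib)
      then show ?thesis using sq_id[of y a x] by simp
    qed
    show "\<mu> / 2 * (norm (y - x))\<^sup>2 \<le> f t y - f t x - gf t x \<bullet> (y - x)"
      unfolding e using assms by (intro mult_right_mono) auto
    show "f t y - f t x - gf t x \<bullet> (y - x) \<le> L / 2 * (norm (y - x))\<^sup>2"
      unfolding e by simp
  qed simp
  have act: "alg_action Q X gf 1 = p"
    unfolding alg_action_def p_def using phase1_indep[of Q gf] by simp
  have alg: "total_cost 1 f (alg_action Q X gf) = L / 2 * (norm (p - a))\<^sup>2 + 1/2 * (norm p)\<^sup>2"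
    unfolding total_cost_def using act by (simp add: f_def alg_action_def)
  define S where "S = {total_cost 1 f xs | xs :: nat \<Rightarrow> real^'d. xs 0 = 0}"
  have S_nn: "\<And>s. s \<in> S \<Longrightarrow> s \<ge> 0"
    unfolding S_def total_cost_def f_def using L0 by auto
  define xs :: "nat \<Rightarrow> real^'d" where "xs = (\<lambda>t. if t = 0 then 0 else a)"
  have xsS: "1/2 * (norm a)\<^sup>2 \<in> S"
    unfolding S_def
    by (rule CollectI, rule exI[of _ xs]) (simp add: xs_def total_cost_def f_def)
  have opt_le: "opt_cost 1 f \<le> 1/2 * (norm a)\<^sup>2"
    unfolding opt_cost_def S_def[symmetric]
    by (rule cInf_lower[OF xsS]) (auto intro: bdd_belowI[of _ 0] S_nn)
  have opt_ge: "opt_cost 1 f \<ge> 0"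
    unfolding opt_cost_def S_def[symmetric]
    using xsS S_nn by (intro cInf_greatest) auto
  have key: "L * (norm (p - a))\<^sup>2 > c * (norm a)\<^sup>2 \<and> (norm (p - a))\<^sup>2 > 0"
  proof (cases "p = 0")
    case True
    then have "a = (\<chi> i. (1::real))" by (simp add: a_def)
    have na: "(norm a)\<^sup>2 > 0" using a0 by simp
    show ?thesis using True na cL by (simp add: mult_strict_right_mono)
  next
    case False
    then have "a = - p" by (simp add: a_def)
    then have "p - a = 2 *\<^sub>R p" by (simp add: scaleR_2)
    then have "(norm (p - a))\<^sup>2 = 4 * (norm a)\<^sup>2" using \<open>a = - p\<close> by (simp add: power2_eq_square)
    moreover have "(norm a)\<^sup>2 > 0" using a0 by simp
    moreover have "c * (norm a)\<^sup>2 < L * (norm a)\<^sup>2"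
      using cL \<open>(norm a)\<^sup>2 > 0\<close> by (rule mult_strict_right_mono)
    moreover have "L * (norm a)\<^sup>2 \<le> L * (4 * (norm a)\<^sup>2)"
      using L0 \<open>(norm a)\<^sup>2 > 0\<close> by (intro mult_left_mono) auto
    moreover have "L * (norm (p - a))\<^sup>2 = L * (4 * (norm a)\<^sup>2)"
      using \<open>(norm (p - a))\<^sup>2 = 4 * (norm a)\<^sup>2\<close> by simp
    ultimately show ?thesis by linarith
  qed
  have pos: "total_cost 1 f (alg_action Q X gf) \<ge> L / 2 * (norm (p - a))\<^sup>2"
    unfolding alg by simp
  have main: "total_cost 1 f (alg_action Q X gf) > c * opt_cost 1 f"
  proof (cases "c \<le> 0")
    case True
    have "c * opt_cost 1 f \<le> 0" using True opt_ge by (rule mult_nonpos_nonneg)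
    moreover have "L / 2 * (norm (p - a))\<^sup>2 > 0" using key L0 by (intro mult_pos_pos) auto
    ultimately show ?thesis using pos by linarith
  next
    case False
    have "c * opt_cost 1 f \<le> c * (1/2 * (norm a)\<^sup>2)" using False opt_le by (intro mult_left_mono) linarith+
    then show ?thesis using pos key by linarith
  qed
  show "\<exists>T f gf. valid_instance \<mu> L T f gf \<and> total_cost T f (alg_action Q X gf) > c * opt_cost T f"
    by (rule exI[of _ 1], rule exI[of _ f], rule exI[of _ gf], rule conjI[OF valid main])
qed

end
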